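(* Let $\phi_{x,m}:\mathcal X\to\mathbb R^m$, $\phi_{z,m}:\mathcal Z\to\mathbb R^m$ be feature maps, $f(x;\theta):=m^{-1/2}\theta^\top\phi_{x,m}(x)$, $g(z;\varphi):=m^{-1/2}\varphi^\top\phi_{z,m}(z)$, with induced kernels $\tilde k_x(x,x')=\frac1m\phi_{x,m}(x)^\top\phi_{x,m}(x')$, $\tilde k_z(z,z')=\frac1m\phi_{z,m}(z)^\top\phi_{z,m}(z')$. Given data $(x_i,y_i,z_i)_{i=1}^n$ and $\lambda,\nu>0$, draw independently $\varphi_0\sim\mathcal N(0,\lambda\nu^{-1}I_m)$, $\theta_0\sim\mathcal N(0,I_m)$, $\tilde y_i\sim\mathcal N(y_i,\lambda)$. Let $\theta^*$ be the (min over $\theta$) solution of the saddle-point problem $$\min_{\theta\in\mathbb R^m}\max_{\varphi\in\mathbb R^m}\ \sum_{i=1}^n\Big((f(x_i;\theta)-\tilde y_i)g(z_i;\varphi)-\tfrac12g(z_i;\varphi)^2\Big)-\tfrac\nu2\|\varphi-\varphi_0\|_2^2+\tfrac\lambda2\|\theta-\theta_0\|_2^2 .$$ Then the random function $f(\cdot;\theta^* )$ is a Gaussian process whose finite-dimensional marginals are: for any test points $x_*$, $f(x_*;\theta^* )\sim\mathcal N(m,S)$ with $m=K_{*x}(\lambda I+LK_{xx})^{-1}LY$, $S=K_{**}-K_{*x}L(\lambda I+K_{xx}L)^{-1}K_{x*}$, $L=K_{zz}(K_{zz}+\nu I)^{-1}$, where all Gram matrices are computed with $\tilde k_x,\tilde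 k_z$.
   Context: $Y=(y_1,\dots,y_n)^\top$; $X=(x_i)$, $Z=(z_i)$; $K_{xx}=\tilde k_x(X,X)$, $K_{*x}=\tilde k_x(x_*,X)$, $K_{x*}=K_{*x}^\top$, $K_{**}=\tilde k_x(x_*,x_* )$, $K_{zz}=\tilde k_z(Z,Z)$. The Gaussian distribution $\mathcal N(m,S)$ above is the (random-feature-approximated) dual-IV quasi-posterior marginal at $x_*$. Randomness is over $\theta_0,\varphi_0,\tilde y$ with the data fixed. *)

theory Defs
  imports "HOL-Analysis.Analysis" "HOL-Probability.Probability"
begin

definition normal_measure :: "real \<Rightarrow> real \<Rightarrow> real measure" where
  "normal_measure mu v =
     (if v = 0 then return borel mu else density lborel (normal_density mu (sqrt v)))"

definition is_gaussian :: "(real^'k) measure \<Rightarrow> real^'k \<Rightarrow> real^'k^'k \<Rightarrow> bool" where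
  "is_gaussian N mu S \<longleftrightarrow> sets N = sets borel \<and>
     (\<forall>a. distr N borel (\<lambda>x. a \<bullet> x) = normal_measure (a \<bullet> mu) (a \<bullet> (S *v a)))"

definition rf_fun :: "('a \<Rightarrow> real^'m) \<Rightarrow> 'a \<Rightarrow> real^'m \<Rightarrow> real" where
  "rf_fun phi x theta = (theta \<bullet> phi x) / sqrt (real CARD('m))"

definition rf_kernel :: "('a \<Rightarrow> real^'m) \<Rightarrow> 'a \<Rightarrow> 'a \<Rightarrow> real" where
  "rf_kernel phi x x' = (phi x \<bullet> phi x') / real CARD('m)"

definition gram :: "('a \<Rightarrow> real^'m) \<Rightarrow> ('i \<Rightarrow> 'a) \<Rightarrow> ('j \<Rightarrow> 'a) \<Rightarrow> real^'j^'i" where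
  "gram phi A B = (\<chi> i j. rf_kernel phi (A i) (B j))"

definition dualiv_obj ::
  "('x \<Rightarrow> real^'m) \<Rightarrow> ('z \<Rightarrow> real^'m) \<Rightarrow> ('n \<Rightarrow> 'x) \<Rightarrow> ('n \<Rightarrow> 'z) \<Rightarrow> real \<Rightarrow> real
   \<Rightarrow> real^'m \<Rightarrow> real^'m \<Rightarrow> real^'n \<Rightarrow> real^'m \<Rightarrow> real^'m \<Rightarrow> real" where
  "dualiv_obj phix phiz X Z lam nu theta0 phi0 yt theta phi =
     (\<Sum>i\<in>UNIV. (rf_fun phix (X i) theta - yt $ i) * rf_fun phiz (Z i) phi
                 - (rf_fun phiz (Z i) phi)\<^sup>2 / 2)
     - nu / 2 * (norm (phi - phi0))\<^sup>2 + lam / 2 * (norm (theta - theta0))\<^sup>2"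

end

theory Submission
  imports Defs
begin


lemma invertible_inv:
  assumes "invertible A"
  shows "A ** matrix_inv A = mat 1" "matrix_inv A ** A = mat 1"
  using someI_ex[OF assms[unfolded invertible_def]] unfolding matrix_inv_def by auto

lemma inj_imp_invertible:
  fixes A :: "real^'n^'n"
  assumes "\<And>x. A *v x = 0 \<Longrightarrow> x = 0"
  shows "invertible A"
proof -
  have "inj ((*v) A)"
  proof (rule injI)
    fix x y assume "A *v x = A *v y"
    then have "A *v (x - y) = 0" by (simp add: matrix_vector_mult_diff_distrib)
    then show "x = y" using assms[of "x - y"] by simp
  qed
  then obtain B where "B ** A = mat 1" using matrix_left_invertible_injective by blast
  then show ?thesis using invertible_left_inverse by blast
qed

lemma inv_mv:
  fixes A :: "real^'n^'n"
  assumes "invertible A"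
  shows "A *v (matrix_inv A *v x) = x" "matrix_inv A *v (A *v x) = x"
  using invertible_inv[OF assms] by (simp_all add: matrix_vector_mul_assoc)

lemma smat_mv: "((c::real) *\<^sub>R mat 1) *v (x::real^'n) = c *\<^sub>R x"
  by (metis matrix_vector_mul_lid scaleR_matrix_vector_assoc)

lemma gram_mv: "((U::real^'m^'n) ** transpose U) *v x = U *v (x v* U)"
  by (simp add: matrix_vector_mul_assoc[symmetric])

lemma inner_mv: "(x::real^'n) \<bullet> ((A::real^'m^'n) *v y) = (x v* A) \<bullet> y"
  by (simp add: dot_lmul_matrix)

lemma gram_quad: "(x::real^'n) \<bullet> (((U::real^'m^'n) ** transpose U) *v y) = (x v* U) \<bullet> (y v* U)"
  by (simp add: gram_mv inner_mv)

lemma eq_by_inner: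
  fixes a b :: "real^'n"
  assumes "\<And>y. a \<bullet> y = b \<bullet> y"
  shows "a = b"
proof -
  have "(a - b) \<bullet> (a - b) = 0" using assms[of "a-b"] by (simp add: inner_diff_left)
  then show ?thesis by simp
qed

locale dualiv =
  fixes Ux Vz :: "real^'m^'n" and lam nu :: real
  assumes lam_pos: "lam > 0" and nu_pos: "nu > 0"
begin

definition "Kxx = Ux ** transpose Ux"
definition "Kzz = Vz ** transpose Vz"
definition "Mi = matrix_inv (Kzz + nu *\<^sub>R mat 1)"
definition "Lm = Kzz ** Mi"
definition "Hm = lam *\<^sub>R mat 1 + Lm ** Kxx"
definition "Gm = lam *\<^sub>R mat 1 + Kxx ** Lm"

lemma Kxx_sym: "x \<bullet> (Kxx *v y) = (Kxx *v x) \<bullet> y"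
  unfolding Kxx_def by (metis gram_quad inner_commute)
lemma Kzz_sym: "x \<bullet> (Kzz *v y) = (Kzz *v x) \<bullet> y"
  unfolding Kzz_def by (metis gram_quad inner_commute)
lemma Kxx_psd: "x \<bullet> (Kxx *v x) \<ge> 0"
  unfolding Kxx_def gram_quad by simp
lemma Kzz_psd: "x \<bullet> (Kzz *v x) \<ge> 0"
  unfolding Kzz_def gram_quad by simp

lemma Kzz_inv: "invertible (Kzz + nu *\<^sub>R mat 1)"
proof (rule inj_imp_invertible)
  fix x assume "(Kzz + nu *\<^sub>R mat 1) *v x = 0"
  then have "x \<bullet> ((Kzz + nu *\<^sub>R mat 1) *v x) = 0" by simp
  then have "x \<bullet> (Kzz *v x) + nu * (x \<bullet> x) = 0"
    by (simp add: matrix_vector_mult_add_rdistrib smat_mv inner_add_right)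
  with Kzz_psd[of x] nu_pos have "x \<bullet> x = 0"
    by (smt (verit) inner_ge_zero mult_pos_pos mult_eq_0_iff)
  then show "x = 0" by simp
qed

lemma R1: "Kzz *v (Mi *v x) + nu *\<^sub>R (Mi *v x) = x"
  using inv_mv(1)[OF Kzz_inv, of x] unfolding Mi_def
  by (simp add: matrix_vector_mult_add_rdistrib smat_mv)

lemma R2: "Mi *v (Kzz *v x + nu *\<^sub>R x) = x"
  using inv_mv(2)[OF Kzz_inv, of x] unfolding Mi_def
  by (simp add: matrix_vector_mult_add_rdistrib smat_mv)

lemma Lm_mv: "Lm *v x = Kzz *v (Mi *v x)"
  by (simp add: Lm_def matrix_vector_mul_assoc)

lemma Mi_comm: "Mi *v (Kzz *v x) = Kzz *v (Mi *v x)"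
proof -
  have "Kzz *v x = Kzz *v (Kzz *v (Mi *v x) + nu *\<^sub>R (Mi *v x))" by (simp add: R1)
  also have "\<dots> = Kzz *v (Kzz *v (Mi *v x)) + nu *\<^sub>R (Kzz *v (Mi *v x))"
    by (simp add: matrix_vector_right_distrib matrix_vector_mult_scaleR)
  finally have "Mi *v (Kzz *v x) = Mi *v (Kzz *v (Kzz *v (Mi *v x)) + nu *\<^sub>R (Kzz *v (Mi *v x)))"
    by simp
  also have "\<dots> = Kzz *v (Mi *v x)" by (rule R2)
  finally show ?thesis .
qed

lemma Mi_sym: "x \<bullet> (Mi *v y) = (Mi *v x) \<bullet> y"
proof -
  have "x \<bullet> (Mi *v y) = (Kzz *v (Mi *v x) + nu *\<^sub>R (Mi *v x)) \<bullet> (Mi *v y)" by (simp add: R1)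
  also have "\<dots> = (Mi *v x) \<bullet> (Kzz *v (Mi *v y)) + (Mi *v x) \<bullet> (nu *\<^sub>R (Mi *v y))"
    by (simp add: inner_add_left Kzz_sym)
  also have "\<dots> = (Mi *v x) \<bullet> (Kzz *v (Mi *v y) + nu *\<^sub>R (Mi *v y))"
    by (simp add: inner_add_right)
  also have "\<dots> = (Mi *v x) \<bullet> y" by (simp add: R1)
  finally show ?thesis .
qed

lemma Lm_sym: "x \<bullet> (Lm *v y) = (Lm *v x) \<bullet> y"
  by (simp add: Lm_mv Kzz_sym Mi_sym Mi_comm[symmetric])

lemma Lm_quad: "x \<bullet> (Lm *v x) \<ge> (Lm *v x) \<bullet> (Lm *v x)"
proof -
  let ?z = "Mi *v x"
  have "x \<bullet> (Lm *v x) = (Kzz *v ?z + nu *\<^sub>R ?z) \<bullet> (Kzz *v ?z)" by (simp add: R1 Lm_mv)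
  also have "\<dots> = (Kzz *v ?z) \<bullet> (Kzz *v ?z) + nu * (?z \<bullet> (Kzz *v ?z))"
    by (simp add: inner_add_left)
  finally show ?thesis using Kzz_psd[of ?z] nu_pos by (simp add: Lm_mv)
qed

lemma Lm_psd: "x \<bullet> (Lm *v x) \<ge> 0"
  using Lm_quad[of x] inner_ge_zero[of "Lm *v x"] by linarith

lemma IminusL: "x - Lm *v x = nu *\<^sub>R (Mi *v x)"
  using R1[of x] by (simp add: Lm_mv algebra_simps)

lemma Hm_mv: "Hm *v x = lam *\<^sub>R x + Lm *v (Kxx *v x)"
  by (simp add: Hm_def matrix_vector_mult_add_rdistrib smat_mv matrix_vector_mul_assoc)
lemma Gm_mv: "Gm *v x = lam *\<^sub>R x + Kxx *v (Lm *v x)"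
  by (simp add: Gm_def matrix_vector_mult_add_rdistrib smat_mv matrix_vector_mul_assoc)

lemma Kxx_zero: "x \<bullet> (Kxx *v x) = 0 \<Longrightarrow> Kxx *v x = 0"
  unfolding Kxx_def gram_quad by (simp add: gram_mv)

lemma Hm_inv: "invertible Hm"
proof (rule inj_imp_invertible)
  fix x assume "Hm *v x = 0"
  then have "(Kxx *v x) \<bullet> (Hm *v x) = 0" by simp
  then have "lam * ((Kxx *v x) \<bullet> x) + (Kxx *v x) \<bullet> (Lm *v (Kxx *v x)) = 0"
    by (simp add: Hm_mv inner_add_right)
  moreover have "(Kxx *v x) \<bullet> x \<ge> 0" using Kxx_psd[of x] by (simp add: inner_commute)
  moreover note Lm_psd[of "Kxx *v x"]
  ultimately have "(Kxx *v x) \<bullet> x = 0" using lam_pos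
    by (smt (verit) mult_pos_pos mult_eq_0_iff mult_nonneg_nonneg)
  then have "Kxx *v x = 0" using Kxx_zero by (simp add: inner_commute)
  with \<open>Hm *v x = 0\<close> have "lam *\<^sub>R x = 0" by (simp add: Hm_mv)
  then show "x = 0" using lam_pos by simp
qed

lemma Gm_inv: "invertible Gm"
proof (rule inj_imp_invertible)
  fix x assume "Gm *v x = 0"
  then have "(Lm *v x) \<bullet> (Gm *v x) = 0" by simp
  then have "lam * ((Lm *v x) \<bullet> x) + (Lm *v x) \<bullet> (Kxx *v (Lm *v x)) = 0"
    by (simp add: Gm_mv inner_add_right)
  moreover have "(Lm *v x) \<bullet> x \<ge> (Lm *v x) \<bullet> (Lm *v x)" using Lm_quad[of x] by (simp add: inner_commute)
  moreover note Kxx_psd[of "Lm *v x"]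
  moreover have "(Lm *v x) \<bullet> (Lm *v x) \<ge> 0" by simp
  ultimately have "(Lm *v x) \<bullet> (Lm *v x) = 0" using lam_pos
    by (smt (verit) mult_pos_pos mult_eq_0_iff mult_nonneg_nonneg mult_left_mono)
  then have "Lm *v x = 0" by simp
  with \<open>Gm *v x = 0\<close> have "lam *\<^sub>R x = 0" by (simp add: Gm_mv)
  then show "x = 0" using lam_pos by simp
qed

end



context dualiv begin

definition "J th0 ph0 y th ph =
   (Ux *v th - y) \<bullet> (Vz *v ph) - (Vz *v ph) \<bullet> (Vz *v ph) / 2
   - nu / 2 * ((ph - ph0) \<bullet> (ph - ph0)) + lam / 2 * ((th - th0) \<bullet> (th - th0))"

lemma J_phi:
  assumes S2: "(Ux *v th - y) v* Vz - (Vz *v ph) v* Vz - nu *\<^sub>R (ph - ph0) = 0"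
  shows "J th0 ph0 y th phi \<le> J th0 ph0 y th ph"
proof -
  define d where "d = phi - ph"
  have phi: "phi = ph + d" by (simp add: d_def)
  have "J th0 ph0 y th phi = J th0 ph0 y th ph
      + ((Ux *v th - y) v* Vz - (Vz *v ph) v* Vz - nu *\<^sub>R (ph - ph0)) \<bullet> d
      - (Vz *v d) \<bullet> (Vz *v d) / 2 - nu / 2 * (d \<bullet> d)"
  proof -
    have i1: "\<And>a. d \<bullet> (a v* Vz) = a \<bullet> (Vz *v d)" by (simp add: inner_mv inner_commute)
    have i2: "(Vz *v d) \<bullet> (Vz *v ph) = (Vz *v ph) \<bullet> (Vz *v d)" by (simp add: inner_commute)
    show ?thesis
    unfolding J_def phi
    apply (simp add: matrix_vector_right_distrib inner_add_left inner_add_right inner_diff_left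
        inner_diff_right inner_mv[symmetric] inner_commute algebra_simps)
    apply (simp add: i1 i2)
    done
  qed
  then have "J th0 ph0 y th phi = J th0 ph0 y th ph - (Vz *v d) \<bullet> (Vz *v d) / 2 - nu / 2 * (d \<bullet> d)"
    using S2 by simp
  moreover have "0 \<le> (Vz *v d) \<bullet> (Vz *v d)" by simp
  moreover have "0 \<le> nu / 2 * (d \<bullet> d)" using nu_pos by simp
  ultimately show ?thesis by linarith
qed


lemma J_theta:
  assumes S1: "lam *\<^sub>R (th - th0) + (Vz *v ph) v* Ux = 0"
  shows "J th0 ph0 y th ph + lam / 2 * ((th' - th) \<bullet> (th' - th)) \<le> J th0 ph0 y th' ph"
proof -
  define d where "d = th' - th"
  have th': "th' = th + d" by (simp add: d_def)
  have i1: "(Ux *v d) \<bullet> (Vz *v ph) = d \<bullet> ((Vz *v ph) v* Ux)" by (metis inner_mv inner_commute)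
  have i2: "ph \<bullet> ((Ux *v d) v* Vz) = (Ux *v d) \<bullet> (Vz *v ph)" by (metis inner_mv inner_commute)
  have "J th0 ph0 y th' ph = J th0 ph0 y th ph
      + (lam *\<^sub>R (th - th0) + (Vz *v ph) v* Ux) \<bullet> d + lam / 2 * (d \<bullet> d)"
    unfolding J_def th'
    apply (simp add: matrix_vector_right_distrib inner_add_left inner_add_right inner_diff_left
        inner_diff_right i1)
    apply (simp add: inner_commute algebra_simps)
    apply (simp add: field_simps)
    done
  then show ?thesis using S1 by (simp add: d_def)
qed

lemma J_bound:
  "J th0 ph0 y th ph \<le> (Ux *v th - y) \<bullet> (Ux *v th - y) / 2 + lam / 2 * ((th - th0) \<bullet> (th - th0))"
proof -
  let ?r = "Ux *v th - y" and ?b = "Vz *v ph"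
  have "0 \<le> (?r - ?b) \<bullet> (?r - ?b)" by simp
  then have "?r \<bullet> ?b - ?b \<bullet> ?b / 2 \<le> ?r \<bullet> ?r / 2"
    by (simp add: inner_diff_left inner_diff_right inner_commute)
  moreover have "0 \<le> nu / 2 * ((ph - ph0) \<bullet> (ph - ph0))" using nu_pos by simp
  ultimately show ?thesis unfolding J_def by linarith
qed

definition "cc th0 ph0 y = matrix_inv Hm *v (Vz *v ph0 + Lm *v (Ux *v th0 - y - Vz *v ph0))"
definition "thh th0 ph0 y = th0 - cc th0 ph0 y v* Ux"
definition "phh th0 ph0 y = ph0 + (Mi *v (Ux *v thh th0 ph0 y - y - Vz *v ph0)) v* Vz"

lemma Kzz_mv: "Kzz *v x = Vz *v (x v* Vz)"
  unfolding Kzz_def by (rule gram_mv)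
lemma Kxx_mv: "Kxx *v x = Ux *v (x v* Ux)"
  unfolding Kxx_def by (rule gram_mv)

lemma S2_sol:
  "(Ux *v thh th0 ph0 y - y) v* Vz - (Vz *v phh th0 ph0 y) v* Vz - nu *\<^sub>R (phh th0 ph0 y - ph0) = 0"
proof -
  define r where "r = Ux *v thh th0 ph0 y - y"
  define e where "e = Vz *v ph0"
  define d where "d = Mi *v (r - e)"
  have ph: "phh th0 ph0 y = ph0 + d v* Vz" by (simp add: phh_def d_def r_def e_def)
  have "Vz *v phh th0 ph0 y = e + Kzz *v d"
    by (simp add: ph e_def Kzz_mv matrix_vector_right_distrib)
  moreover have "Kzz *v d + nu *\<^sub>R d = r - e" unfolding d_def by (rule R1)
  then have rr: "r = e + Kzz *v d + nu *\<^sub>R d" by (simp add: algebra_simps)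
  ultimately show ?thesis
    by (simp add: r_def[symmetric] rr ph vector_matrix_left_distrib scaleR_vector_matrix_assoc)
qed

lemma S1_sol:
  "lam *\<^sub>R (thh th0 ph0 y - th0) + (Vz *v phh th0 ph0 y) v* Ux = 0"
proof -
  define e where "e = Vz *v ph0"
  define t where "t = Ux *v th0 - y - e"
  define c where "c = cc th0 ph0 y"
  define r where "r = Ux *v thh th0 ph0 y - y"
  define d where "d = Mi *v (r - e)"
  have th: "thh th0 ph0 y = th0 - c v* Ux" by (simp add: thh_def c_def)
  have ph: "phh th0 ph0 y = ph0 + d v* Vz" by (simp add: phh_def d_def r_def e_def)
  have Vph: "Vz *v phh th0 ph0 y = e + Lm *v (r - e)"
    by (simp add: ph e_def Kzz_mv[symmetric] Lm_mv d_def matrix_vector_right_distrib)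
  have re: "r - e = t - Kxx *v c"
    by (simp add: r_def th t_def Kxx_mv matrix_vector_mult_diff_distrib)
  have Hc: "Hm *v c = e + Lm *v t"
    by (simp add: c_def cc_def inv_mv(1)[OF Hm_inv] e_def t_def)
  then have "lam *\<^sub>R c = e + Lm *v (r - e)"
    by (simp add: re Hm_mv matrix_vector_mult_diff_distrib algebra_simps)
  then have "(e + Lm *v (r - e)) v* Ux = (lam *\<^sub>R c) v* Ux" by simp
  then show ?thesis
    by (simp add: th Vph scaleR_vector_matrix_assoc[symmetric] vector_matrix_mult_diff_distrib
        algebra_simps)
qed

lemma argmin:
  assumes "\<forall>th. (SUP ph. J th0 ph0 y ts ph) \<le> (SUP ph. J th0 ph0 y th ph)"
  shows "ts = thh th0 ph0 y"
proof -
  let ?th = "thh th0 ph0 y" and ?ph = "phh th0 ph0 y"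
  have sup_hat: "(SUP ph. J th0 ph0 y ?th ph) = J th0 ph0 y ?th ?ph"
  proof (rule antisym)
    show "(SUP ph. J th0 ph0 y ?th ph) \<le> J th0 ph0 y ?th ?ph"
      by (rule cSUP_least) (auto intro: J_phi[OF S2_sol])
    show "J th0 ph0 y ?th ?ph \<le> (SUP ph. J th0 ph0 y ?th ph)"
      by (rule cSUP_upper) (auto intro!: bdd_aboveI2 J_phi[OF S2_sol])
  qed
  have bdd: "bdd_above (range (J th0 ph0 y ts))"
    by (rule bdd_aboveI2[OF J_bound])
  have "J th0 ph0 y ?th ?ph + lam / 2 * ((ts - ?th) \<bullet> (ts - ?th)) \<le> J th0 ph0 y ts ?ph"
    by (rule J_theta[OF S1_sol])
  also have "\<dots> \<le> (SUP ph. J th0 ph0 y ts ph)" by (rule cSUP_upper[OF _ bdd]) simp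
  also have "\<dots> \<le> (SUP ph. J th0 ph0 y ?th ph)" using assms by blast
  finally have "lam / 2 * ((ts - ?th) \<bullet> (ts - ?th)) \<le> 0" by (simp add: sup_hat)
  then have "(ts - ?th) \<bullet> (ts - ?th) \<le> 0" using lam_pos
    by (simp add: mult_le_0_iff)
  then have "(ts - ?th) \<bullet> (ts - ?th) = 0" using inner_ge_zero[of "ts - ?th"] by linarith
  then show ?thesis by simp
qed

end



context dualiv begin

definition "qv St a = Ux *v (a v* St)"
definition "pv St a = qv St a v* matrix_inv Hm"
definition "alpha St a = a v* St - (Lm *v pv St a) v* Ux"
definition "beta St a = - ((pv St a - Lm *v pv St a) v* Vz)"
definition "gamma St a = Lm *v pv St a"

lemma inner_vm: "((x::real^'a) v* (A::real^'b^'a)) \<bullet> y = x \<bullet> (A *v y)"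
  by (rule dot_lmul_matrix)

lemma lin_form:
  "a \<bullet> (St *v thh th0 ph0 y) = alpha St a \<bullet> th0 + beta St a \<bullet> ph0 + gamma St a \<bullet> y"
proof -
  define e where "e = Vz *v ph0"
  define w where "w = e + Lm *v (Ux *v th0 - y - e)"
  define c where "c = matrix_inv Hm *v w"
  define p where "p = pv St a"
  have th: "thh th0 ph0 y = th0 - c v* Ux" by (simp add: thh_def cc_def c_def w_def e_def)
  have 1: "a \<bullet> (St *v (c v* Ux)) = p \<bullet> w"
  proof -
    have "a \<bullet> (St *v (c v* Ux)) = (c v* Ux) \<bullet> (a v* St)" by (simp add: inner_mv inner_commute)
    also have "\<dots> = c \<bullet> qv St a" by (simp add: inner_vm qv_def)
    also have "\<dots> = qv St a \<bullet> (matrix_inv Hm *v w)" by (simp add: c_def inner_commute)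
    also have "\<dots> = p \<bullet> w" by (simp add: inner_mv p_def pv_def)
    finally show ?thesis .
  qed
  have 2: "p \<bullet> w = (p - Lm *v p) \<bullet> e + (Lm *v p) \<bullet> (Ux *v th0) - (Lm *v p) \<bullet> y"
    by (simp add: w_def Lm_sym inner_add_right inner_diff_right matrix_vector_right_distrib
        matrix_vector_mult_diff_distrib inner_diff_left)
  have 3: "(p - Lm *v p) \<bullet> e = ((p - Lm *v p) v* Vz) \<bullet> ph0" by (simp add: e_def inner_mv)
  have 4: "(Lm *v p) \<bullet> (Ux *v th0) = ((Lm *v p) v* Ux) \<bullet> th0" by (simp add: inner_mv)
  have "a \<bullet> (St *v thh th0 ph0 y) = (a v* St) \<bullet> th0 - a \<bullet> (St *v (c v* Ux))"
    by (simp add: th matrix_vector_mult_diff_distrib inner_diff_right inner_mv)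
  also have "\<dots> = (a v* St) \<bullet> th0 - (((p - Lm *v p) v* Vz) \<bullet> ph0 + ((Lm *v p) v* Ux) \<bullet> th0 - (Lm *v p) \<bullet> y)"
    using 1 2 3 4 by simp
  also have "\<dots> = alpha St a \<bullet> th0 + beta St a \<bullet> ph0 + gamma St a \<bullet> y"
    by (simp add: alpha_def beta_def gamma_def p_def inner_diff_left)
  finally show ?thesis .
qed

lemma mean_form:
  "gamma St a \<bullet> Y = a \<bullet> ((St ** transpose Ux ** matrix_inv Hm) *v (Lm *v Y))"
proof -
  define z where "z = matrix_inv Hm *v (Lm *v Y)"
  have "gamma St a \<bullet> Y = pv St a \<bullet> (Lm *v Y)" by (simp add: gamma_def Lm_sym)
  also have "\<dots> = qv St a \<bullet> z" by (simp add: pv_def z_def inner_vm)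
  also have "\<dots> = (a v* St) \<bullet> (z v* Ux)" unfolding qv_def by (metis inner_vm inner_commute)
  also have "\<dots> = a \<bullet> (St *v (z v* Ux))" by (simp add: inner_vm)
  also have "\<dots> = a \<bullet> ((St ** transpose Ux ** matrix_inv Hm) *v (Lm *v Y))"
    by (simp add: z_def matrix_vector_mul_assoc[symmetric])
  finally show ?thesis .
qed

lemma pv_G: "Gm *v pv St a = qv St a"
proof (rule eq_by_inner)
  fix y
  let ?p = "pv St a"
  have "(Gm *v ?p) \<bullet> y = ?p \<bullet> (Hm *v y)"
    by (simp add: Gm_mv Hm_mv inner_add_left inner_add_right Kxx_sym[symmetric] Lm_sym)
  also have "\<dots> = qv St a \<bullet> y"
    by (simp add: pv_def inner_vm inv_mv(2)[OF Hm_inv])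
  finally show "(Gm *v ?p) \<bullet> y = qv St a \<bullet> y" .
qed

lemma pv_Gi: "pv St a = matrix_inv Gm *v qv St a"
  using inv_mv(2)[OF Gm_inv, of "pv St a"] by (simp add: pv_G)

lemma var_form:
  "alpha St a \<bullet> (mat 1 *v alpha St a) + beta St a \<bullet> (((lam / nu) *\<^sub>R mat 1) *v beta St a)
   + gamma St a \<bullet> ((lam *\<^sub>R mat 1) *v gamma St a)
   = a \<bullet> ((St ** transpose St - St ** transpose Ux ** Lm ** matrix_inv Gm ** transpose (St ** transpose Ux)) *v a)"
proof -
  define s where "s = a v* St"
  define q where "q = qv St a"
  define p where "p = pv St a"
  define h where "h = Lm *v p"
  have q: "q = Ux *v s" by (simp add: q_def qv_def s_def)
  have pG: "Gm *v p = q" by (simp add: p_def q_def pv_G)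
  have pGi: "p = matrix_inv Gm *v q" by (simp add: p_def q_def pv_Gi)
  have g: "p - Lm *v p = nu *\<^sub>R (Mi *v p)" by (rule IminusL)
  have aa: "alpha St a \<bullet> alpha St a = s \<bullet> s - 2 * (h \<bullet> q) + h \<bullet> (Kxx *v h)"
  proof -
    have "s \<bullet> (h v* Ux) = h \<bullet> q" unfolding q by (metis inner_vm inner_commute)
    moreover have "(h v* Ux) \<bullet> (h v* Ux) = h \<bullet> (Kxx *v h)" by (simp add: Kxx_def gram_quad)
    ultimately show ?thesis
      by (simp add: alpha_def s_def[symmetric] p_def[symmetric] h_def[symmetric] inner_diff_left
          inner_diff_right inner_commute)
  qed
  have bb: "beta St a \<bullet> beta St a = nu * nu * ((Mi *v p) \<bullet> h)"
  proof -
    have "beta St a \<bullet> beta St a = (p - Lm *v p) \<bullet> (Kzz *v (p - Lm *v p))"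
      by (simp add: beta_def p_def[symmetric] Kzz_def gram_quad)
    also have "\<dots> = nu * nu * ((Mi *v p) \<bullet> (Kzz *v (Mi *v p)))"
      by (simp add: g matrix_vector_mult_scaleR)
    also have "\<dots> = nu * nu * ((Mi *v p) \<bullet> h)" by (simp add: h_def Lm_mv)
    finally show ?thesis .
  qed
  have gg: "gamma St a \<bullet> gamma St a = h \<bullet> h" by (simp add: gamma_def h_def p_def)
  have key1: "nu * ((Mi *v p) \<bullet> h) + h \<bullet> h = p \<bullet> h"
  proof -
    have "p = h + nu *\<^sub>R (Mi *v p)" using R1[of p] by (simp add: h_def Lm_mv add.commute)
    then have "p \<bullet> h = (h + nu *\<^sub>R (Mi *v p)) \<bullet> h" by simp
    then show ?thesis by (simp add: inner_add_left)
  qed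
  have key2: "h \<bullet> (Kxx *v h) + lam * (p \<bullet> h) = h \<bullet> q"
  proof -
    have "h \<bullet> q = p \<bullet> (Lm *v (Gm *v p))" by (simp add: pG h_def Lm_sym)
    also have "\<dots> = p \<bullet> (Lm *v (Kxx *v h)) + lam * (p \<bullet> h)"
      by (simp add: Gm_mv h_def matrix_vector_right_distrib matrix_vector_mult_scaleR inner_add_right)
    also have "\<dots> = h \<bullet> (Kxx *v h) + lam * (p \<bullet> h)" by (simp add: Lm_sym h_def)
    finally show ?thesis by simp
  qed
  have rhs: "a \<bullet> ((St ** transpose St - St ** transpose Ux ** Lm ** matrix_inv Gm ** transpose (St ** transpose Ux)) *v a)
      = s \<bullet> s - h \<bullet> q"
  proof -
    have t: "transpose (St ** transpose Ux) *v a = q"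
      by (simp add: matrix_transpose_mul q qv_def s_def matrix_vector_mul_assoc[symmetric])
    have "a \<bullet> ((St ** transpose Ux ** Lm ** matrix_inv Gm ** transpose (St ** transpose Ux)) *v a)
        = a \<bullet> (St *v ((Lm *v (matrix_inv Gm *v q)) v* Ux))"
      by (simp only: matrix_vector_mul_assoc[symmetric] t) simp
    also have "\<dots> = s \<bullet> (h v* Ux)" by (simp add: inner_mv pGi[symmetric] h_def s_def)
    also have "\<dots> = q \<bullet> h" unfolding q by (metis inner_vm inner_commute)
    finally have 1: "a \<bullet> ((St ** transpose Ux ** Lm ** matrix_inv Gm ** transpose (St ** transpose Ux)) *v a) = q \<bullet> h" .
    have 2: "a \<bullet> ((St ** transpose St) *v a) = s \<bullet> s" by (simp add: gram_quad s_def)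
    show ?thesis using 1 2 by (simp add: matrix_vector_mult_diff_rdistrib inner_diff_right inner_commute)
  qed
  have "alpha St a \<bullet> (mat 1 *v alpha St a) + beta St a \<bullet> (((lam / nu) *\<^sub>R mat 1) *v beta St a)
   + gamma St a \<bullet> ((lam *\<^sub>R mat 1) *v gamma St a)
   = alpha St a \<bullet> alpha St a + (lam / nu) * (beta St a \<bullet> beta St a) + lam * (gamma St a \<bullet> gamma St a)"
    by (simp add: smat_mv)
  also have "\<dots> = s \<bullet> s - 2 * (h \<bullet> q) + h \<bullet> (Kxx *v h) + lam * (nu * ((Mi *v p) \<bullet> h) + h \<bullet> h)"
    using nu_pos by (simp add: aa bb gg field_simps)
  also have "\<dots> = s \<bullet> s - h \<bullet> q" using key1 key2 by simp
  finally show ?thesis using rhs by simp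
qed

end



lemma real_dist_normal_measure:
  assumes "v \<ge> 0" shows "real_distribution (normal_measure mu v)"
proof (cases "v = 0")
  case True
  then show ?thesis unfolding normal_measure_def
    by (simp add: real_distribution_def real_distribution_axioms_def prob_space_return)
next
  case False
  then show ?thesis unfolding normal_measure_def
    using prob_space_normal_density[of "sqrt v" mu] assms
    by (simp add: real_distribution_def real_distribution_axioms_def)
qed

lemma char_normal_measure:
  assumes "v \<ge> 0"
  shows "char (normal_measure mu v) t = exp (\<i> * complex_of_real (t * mu) - complex_of_real (v * t\<^sup>2 / 2))"
proof (cases "v = 0")
  case True
  then show ?thesis unfolding normal_measure_def char_def
    by (simp add: integral_return)
next
  case False
  with assms have vpos: "v > 0" by simp
  interpret S: prob_space "density lborel (normal_density 0 1)"
    by (rule prob_space_normal_density) simp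
  have D0: "distributed (density lborel (normal_density 0 1)) lborel (\<lambda>x. x) (normal_density 0 1)"
    unfolding distributed_def by (auto simp: distr_id2)
  have D: "distributed (density lborel (normal_density 0 1)) lborel (\<lambda>x. mu + sqrt v * x)
      (normal_density (mu + sqrt v * 0) (\<bar>sqrt v\<bar> * 1))"
    by (rule S.normal_density_affine[OF D0]) (use vpos in auto)
  then have eq: "normal_measure mu v = distr (density lborel (normal_density 0 1)) lborel (\<lambda>x. mu + sqrt v * x)"
    using False vpos by (simp add: normal_measure_def distributed_def)
  have "char (normal_measure mu v) t = (CLINT x|density lborel (normal_density 0 1). iexp (t * (mu + sqrt v * x)))"
    unfolding eq char_def by (subst integral_distr) auto
  also have "\<dots> = (CLINT x|density lborel (normal_density 0 1). iexp (t * mu) * iexp ((t * sqrt v) * x))"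
    by (intro Bochner_Integration.integral_cong) (auto simp: algebra_simps exp_add[symmetric])
  also have "\<dots> = iexp (t * mu) * char (density lborel (normal_density 0 1)) (t * sqrt v)"
    unfolding char_def by simp
  also have "\<dots> = iexp (t * mu) * complex_of_real (exp (- ((t * sqrt v)\<^sup>2) / 2))"
    by (simp add: char_std_normal_distribution)
  also have "\<dots> = iexp (t * mu) * exp (complex_of_real (- (v * t\<^sup>2 / 2)))"
  proof -
    have s: "(t * sqrt v)\<^sup>2 = v * t\<^sup>2" using vpos by (simp add: power_mult_distrib)
    show ?thesis by (simp only: s exp_of_real) simp
  qed
  also have "\<dots> = exp (\<i> * complex_of_real (t * mu) - complex_of_real (v * t\<^sup>2 / 2))"
    by (subst exp_add[symmetric]) simp
  finally show ?thesis .
qed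

lemma distr_pair_snd':
  assumes P: "prob_space P" and Q: "sigma_finite_measure Q" and sQ: "sets Q = sets N"
  shows "distr (P \<Otimes>\<^sub>M Q) N snd = Q"
proof -
  interpret P: prob_space P by (rule P)
  interpret Q: sigma_finite_measure Q by (rule Q)
  interpret PQ: pair_sigma_finite P Q by unfold_locales
  have "distr (P \<Otimes>\<^sub>M Q) N snd = distr (distr (Q \<Otimes>\<^sub>M P) (P \<Otimes>\<^sub>M Q) (\<lambda>(x, y). (y, x))) N snd"
    using PQ.distr_pair_swap by (rule arg_cong[where f="\<lambda>X. distr X N snd"])
  also have "\<dots> = distr (Q \<Otimes>\<^sub>M P) N (snd \<circ> (\<lambda>(x, y). (y, x)))"
  proof -
    have m1: "snd \<in> measurable (P \<Otimes>\<^sub>M Q) N" using measurable_snd measurable_cong_sets[OF refl sQ] by blast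
    have m2: "(\<lambda>(x,y). (y,x)) \<in> measurable (Q \<Otimes>\<^sub>M P) (P \<Otimes>\<^sub>M Q)" by (rule measurable_pair_swap')
    show ?thesis by (rule distr_distr[OF m1 m2])
  qed
  also have "\<dots> = distr (Q \<Otimes>\<^sub>M P) Q fst"
    by (rule distr_cong) (auto simp: sQ)
  also have "\<dots> = Q" by (rule P.distr_pair_fst)
  finally show ?thesis .
qed

lemma indep_from_joint:
  assumes M: "prob_space M" and X[measurable]: "X \<in> measurable M S" and Y[measurable]: "Y \<in> measurable M T"
    and J: "distr M (S \<Otimes>\<^sub>M T) (\<lambda>w. (X w, Y w)) = distr M S X \<Otimes>\<^sub>M distr M T Y"
    and f[measurable]: "f \<in> borel_measurable S" and g[measurable]: "(g :: _ \<Rightarrow> real) \<in> borel_measurable T"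
  shows "prob_space.indep_var M borel (\<lambda>w. f (X w)) borel (\<lambda>w. g (Y w))"
proof -
  interpret prob_space M by (rule M)
  have "distr M borel (\<lambda>w. f (X w)) \<Otimes>\<^sub>M distr M borel (\<lambda>w. g (Y w))
      = distr (distr M S X) borel f \<Otimes>\<^sub>M distr (distr M T Y) borel g"
    by (simp add: distr_distr comp_def)
  also have "\<dots> = distr (distr M S X \<Otimes>\<^sub>M distr M T Y) (borel \<Otimes>\<^sub>M borel) (\<lambda>(x, y). (f x, g y))"
    by (rule pair_measure_distr) (auto intro!: prob_space_imp_sigma_finite prob_space.prob_space_distr prob_space_distr)
  also have "\<dots> = distr M (borel \<Otimes>\<^sub>M borel) (\<lambda>w. (f (X w), g (Y w)))"
    unfolding J[symmetric] by (subst distr_distr) (auto simp: comp_def)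
  finally show ?thesis
    unfolding indep_var_distribution_eq by auto
qed

lemma gauss3:
  fixes Th Ph :: "'w \<Rightarrow> real^'m" and Yv :: "'w \<Rightarrow> real^'n"
  assumes M: "prob_space M"
    and [measurable]: "Th \<in> borel_measurable M" "Ph \<in> borel_measurable M" "Yv \<in> borel_measurable M"
    and ind: "distr M (borel \<Otimes>\<^sub>M (borel \<Otimes>\<^sub>M borel)) (\<lambda>w. (Th w, (Ph w, Yv w)))
         = distr M borel Th \<Otimes>\<^sub>M (distr M borel Ph \<Otimes>\<^sub>M distr M borel Yv)"
    and g1: "distr M borel (\<lambda>w. al \<bullet> Th w) = normal_measure m1 v1"
    and g2: "distr M borel (\<lambda>w. be \<bullet> Ph w) = normal_measure m2 v2"
    and g3: "distr M borel (\<lambda>w. ga \<bullet> Yv w) = normal_measure m3 v3"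
    and v: "v1 \<ge> 0" "v2 \<ge> 0" "v3 \<ge> 0"
  shows "distr M borel (\<lambda>w. al \<bullet> Th w + be \<bullet> Ph w + ga \<bullet> Yv w) = normal_measure (m1 + m2 + m3) (v1 + v2 + v3)"
proof -
  interpret prob_space M by (rule M)
  have ps: "prob_space (distr M borel Th)" "prob_space (distr M borel Ph)" "prob_space (distr M borel Yv)"
    by (auto intro!: prob_space_distr)
  have step1: "distr M (borel \<Otimes>\<^sub>M borel) (\<lambda>w. (Ph w, Yv w)) = distr M borel Ph \<Otimes>\<^sub>M distr M borel Yv"
  proof -
    have "distr M (borel \<Otimes>\<^sub>M borel) (\<lambda>w. (Ph w, Yv w))
        = distr (distr M (borel \<Otimes>\<^sub>M (borel \<Otimes>\<^sub>M borel)) (\<lambda>w. (Th w, (Ph w, Yv w)))) (borel \<Otimes>\<^sub>M borel) snd"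
      by (subst distr_distr) (auto simp: comp_def)
    also have "\<dots> = distr M borel Ph \<Otimes>\<^sub>M distr M borel Yv"
      unfolding ind
    proof (rule distr_pair_snd'[OF ps(1)])
      interpret A: prob_space "distr M borel Ph" by (rule ps(2))
      interpret B: prob_space "distr M borel Yv" by (rule ps(3))
      interpret AB: pair_prob_space "distr M borel Ph" "distr M borel Yv" by unfold_locales
      show "sigma_finite_measure (distr M borel Ph \<Otimes>\<^sub>M distr M borel Yv)"
        by (rule AB.P.sigma_finite_measure_axioms)
      show "sets (distr M borel Ph \<Otimes>\<^sub>M distr M borel Yv) = sets (borel \<Otimes>\<^sub>M borel)"
        by (intro sets_pair_measure_cong) auto
    qed
    finally show ?thesis .
  qed
  have J2: "distr M (borel \<Otimes>\<^sub>M (borel \<Otimes>\<^sub>M borel)) (\<lambda>w. (Th w, (Ph w, Yv w)))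
         = distr M borel Th \<Otimes>\<^sub>M distr M (borel \<Otimes>\<^sub>M borel) (\<lambda>w. (Ph w, Yv w))"
    by (simp add: ind step1)
  have step4: "indep_var borel (\<lambda>w. al \<bullet> Th w) borel (\<lambda>w. be \<bullet> Ph w + ga \<bullet> Yv w)"
    using indep_from_joint[OF M _ _ J2, of "\<lambda>x. al \<bullet> x" "\<lambda>p. be \<bullet> fst p + ga \<bullet> snd p"]
    by simp
  have step5: "indep_var borel (\<lambda>w. be \<bullet> Ph w) borel (\<lambda>w. ga \<bullet> Yv w)"
    using indep_from_joint[OF M _ _ step1, of "\<lambda>x. be \<bullet> x" "\<lambda>x. ga \<bullet> x"]
    by simp
  have ch: "char (distr M borel (\<lambda>w. al \<bullet> Th w + be \<bullet> Ph w + ga \<bullet> Yv w)) t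
      = char (normal_measure (m1 + m2 + m3) (v1 + v2 + v3)) t" for t
  proof -
    have "char (distr M borel (\<lambda>w. al \<bullet> Th w + be \<bullet> Ph w + ga \<bullet> Yv w)) t
        = char (distr M borel (\<lambda>w. al \<bullet> Th w + (be \<bullet> Ph w + ga \<bullet> Yv w))) t"
      by (simp add: add.assoc)
    also have "\<dots> = char (distr M borel (\<lambda>w. al \<bullet> Th w)) t
        * (char (distr M borel (\<lambda>w. be \<bullet> Ph w)) t * char (distr M borel (\<lambda>w. ga \<bullet> Yv w)) t)"
      by (simp add: char_distr_add[OF step4] char_distr_add[OF step5])
    also have "\<dots> = exp (\<i> * complex_of_real (t * m1) - complex_of_real (v1 * t\<^sup>2 / 2))
        * (exp (\<i> * complex_of_real (t * m2) - complex_of_real (v2 * t\<^sup>2 / 2))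
         * exp (\<i> * complex_of_real (t * m3) - complex_of_real (v3 * t\<^sup>2 / 2)))"
      by (simp add: g1 g2 g3 char_normal_measure v)
    also have "\<dots> = exp (\<i> * complex_of_real (t * (m1 + m2 + m3)) - complex_of_real ((v1 + v2 + v3) * t\<^sup>2 / 2))"
      unfolding exp_add[symmetric] by (rule arg_cong[where f = exp]) (simp add: field_simps)
    also have "\<dots> = char (normal_measure (m1 + m2 + m3) (v1 + v2 + v3)) t"
      using v by (simp add: char_normal_measure)
    finally show ?thesis .
  qed
  show ?thesis
    by (rule Levy_uniqueness) (auto intro!: real_dist_normal_measure simp: v ch)
qed




definition fmat :: "('a \<Rightarrow> real^'m) \<Rightarrow> ('i \<Rightarrow> 'a) \<Rightarrow> real^'m^'i" where
  "fmat phi A = (\<chi> i. (1 / sqrt (real CARD('m))) *\<^sub>R phi (A i))"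

lemma gram_fmat: "gram phi A B = fmat phi A ** transpose (fmat phi B)"
proof -
  have c: "sqrt (real CARD('m)) * sqrt (real CARD('m)) = real CARD('m)" by simp
  show ?thesis
    unfolding gram_def fmat_def rf_kernel_def
    by (simp add: vec_eq_iff matrix_matrix_mult_def transpose_def inner_vec_def sum_divide_distrib
        field_simps c)
qed

lemma rf_fmat: "rf_fun phi (A i) th = (fmat phi A *v th) $ i"
  unfolding rf_fun_def fmat_def matrix_vector_mul_component
  by (simp add: inner_commute divide_inverse)

lemma rf_vec: "(\<chi> k. rf_fun phi (A k) th) = fmat phi A *v th"
  by (simp add: vec_eq_iff rf_fmat)

lemma obj_J:
  fixes X :: "'n::finite \<Rightarrow> 'x"
  assumes D: "dualiv lam nu"
  shows "dualiv_obj phix phiz X Z lam nu th0 ph0 y th ph = dualiv.J (fmat phix X) (fmat phiz Z) lam nu th0 ph0 y th ph"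
proof -
  have "(\<Sum>i\<in>UNIV. (rf_fun phix (X i) th - y $ i) * rf_fun phiz (Z i) ph - (rf_fun phiz (Z i) ph)\<^sup>2 / 2)
     = (fmat phix X *v th - y) \<bullet> (fmat phiz Z *v ph) - (fmat phiz Z *v ph) \<bullet> (fmat phiz Z *v ph) / 2"
    by (simp add: rf_fmat inner_vec_def sum_subtractf sum_divide_distrib power2_eq_square)
  then show ?thesis
    unfolding dualiv_obj_def by (simp add: dualiv.J_def[OF D] power2_norm_eq_inner)
qed




theorem mainTheorem6:
  fixes M :: "'w measure"
    and phix :: "'x \<Rightarrow> real^'m" and phiz :: "'z \<Rightarrow> real^'m"
    and X :: "'n::finite \<Rightarrow> 'x" and Z :: "'n \<Rightarrow> 'z" and Y :: "real^'n"
    and lam nu :: real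
    and theta0 phi0 :: "'w \<Rightarrow> real^'m" and yt :: "'w \<Rightarrow> real^'n"
    and thetastar :: "'w \<Rightarrow> real^'m"
    and xs :: "'k::finite \<Rightarrow> 'x"
  assumes "prob_space M"
    and "lam > 0" and "nu > 0"
    and "theta0 \<in> borel_measurable M" and "phi0 \<in> borel_measurable M" and "yt \<in> borel_measurable M"
    and "is_gaussian (distr M borel phi0) 0 ((lam / nu) *\<^sub>R mat 1)"
    and "is_gaussian (distr M borel theta0) 0 (mat 1)"
    and "is_gaussian (distr M borel yt) Y (lam *\<^sub>R mat 1)"
    and "distr M (borel \<Otimes>\<^sub>M (borel \<Otimes>\<^sub>M borel)) (\<lambda>w. (theta0 w, (phi0 w, yt w)))
         = distr M borel theta0 \<Otimes>\<^sub>M (distr M borel phi0 \<Otimes>\<^sub>M distr M borel yt)"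
    and "\<forall>w\<in>space M. \<forall>theta.
           (SUP phi. dualiv_obj phix phiz X Z lam nu (theta0 w) (phi0 w) (yt w) (thetastar w) phi)
           \<le> (SUP phi. dualiv_obj phix phiz X Z lam nu (theta0 w) (phi0 w) (yt w) theta phi)"
  shows
    "let Kxx = gram phix X X; Ksx = gram phix xs X; Kss = gram phix xs xs;
         Kzz = gram phiz Z Z;
         L = Kzz ** matrix_inv (Kzz + nu *\<^sub>R mat 1);
         mu = (Ksx ** matrix_inv (lam *\<^sub>R mat 1 + L ** Kxx)) *v (L *v Y);
         S = Kss - Ksx ** L ** matrix_inv (lam *\<^sub>R mat 1 + Kxx ** L) ** transpose Ksx
     in is_gaussian (distr M borel (\<lambda>w. \<chi> k. rf_fun phix (xs k) (thetastar w))) mu S"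
proof -
  note A = assms
  let ?Ux = "fmat phix X" and ?Vz = "fmat phiz Z" and ?St = "fmat phix xs"
  have Dl: "dualiv lam nu" using A(2,3) by (simp add: dualiv_def)
  interpret D: dualiv ?Ux ?Vz lam nu by (rule Dl)
  interpret P: prob_space M by (rule A(1))
  note [measurable] = A(4,5,6)
  define Fl where "Fl w = ?St *v D.thh (theta0 w) (phi0 w) (yt w)" for w
  have ts: "thetastar w = D.thh (theta0 w) (phi0 w) (yt w)" if "w \<in> space M" for w
    using A(11) that by (intro D.argmin) (simp add: obj_J[OF Dl])
  have F: "distr M borel (\<lambda>w. \<chi> k. rf_fun phix (xs k) (thetastar w)) = distr M borel Fl"
    by (rule distr_cong) (auto simp: rf_vec ts Fl_def)
  have lin: "a \<bullet> Fl w = D.alpha ?St a \<bullet> theta0 w + D.beta ?St a \<bullet> phi0 w + D.gamma ?St a \<bullet> yt w" for a w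
    unfolding Fl_def by (rule D.lin_form)
  have Flm[measurable]: "Fl \<in> borel_measurable M"
  proof (rule borel_measurable_euclidean_space[THEN iffD2], intro ballI)
    fix i :: "real^'k"
    have "(\<lambda>x. Fl x \<bullet> i) = (\<lambda>w. D.alpha ?St i \<bullet> theta0 w + D.beta ?St i \<bullet> phi0 w + D.gamma ?St i \<bullet> yt w)"
      using lin by (simp add: inner_commute)
    then show "(\<lambda>x. Fl x \<bullet> i) \<in> borel_measurable M" by simp
  qed
  have gauss_lin: "distr M borel (\<lambda>w. a \<bullet> V w) = normal_measure (a \<bullet> m) (a \<bullet> (S *v a))"
    if "is_gaussian (distr M borel V) m S" "V \<in> borel_measurable M" for a :: "real^'q::finite" and V m S
  proof -
    have "distr M borel (\<lambda>w. a \<bullet> V w) = distr (distr M borel V) borel (\<lambda>x. a \<bullet> x)"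
      using that(2) by (subst distr_distr) (auto simp: comp_def)
    then show ?thesis using that(1) unfolding is_gaussian_def by simp
  qed
  have main: "distr M borel (\<lambda>w. a \<bullet> Fl w)
      = normal_measure (a \<bullet> ((?St ** transpose ?Ux ** matrix_inv D.Hm) *v (D.Lm *v Y)))
          (a \<bullet> ((?St ** transpose ?St - ?St ** transpose ?Ux ** D.Lm ** matrix_inv D.Gm ** transpose (?St ** transpose ?Ux)) *v a))"
    for a
  proof -
    let ?al = "D.alpha ?St a" and ?be = "D.beta ?St a" and ?ga = "D.gamma ?St a"
    have "distr M borel (\<lambda>w. a \<bullet> Fl w) = distr M borel (\<lambda>w. ?al \<bullet> theta0 w + ?be \<bullet> phi0 w + ?ga \<bullet> yt w)"
      by (simp add: lin)
    also have "\<dots> = normal_measure (?al \<bullet> 0 + ?be \<bullet> 0 + ?ga \<bullet> Y)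
        (?al \<bullet> (mat 1 *v ?al) + ?be \<bullet> (((lam / nu) *\<^sub>R mat 1) *v ?be) + ?ga \<bullet> ((lam *\<^sub>R mat 1) *v ?ga))"
    proof (rule gauss3[OF A(1) A(4) A(5) A(6) A(10)])
      show "distr M borel (\<lambda>w. ?al \<bullet> theta0 w) = normal_measure (?al \<bullet> 0) (?al \<bullet> (mat 1 *v ?al))"
        by (rule gauss_lin[OF A(8) A(4)])
      show "distr M borel (\<lambda>w. ?be \<bullet> phi0 w) = normal_measure (?be \<bullet> 0) (?be \<bullet> (((lam / nu) *\<^sub>R mat 1) *v ?be))"
        by (rule gauss_lin[OF A(7) A(5)])
      show "distr M borel (\<lambda>w. ?ga \<bullet> yt w) = normal_measure (?ga \<bullet> Y) (?ga \<bullet> ((lam *\<^sub>R mat 1) *v ?ga))"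
        by (rule gauss_lin[OF A(9) A(6)])
      show "0 \<le> ?al \<bullet> (mat 1 *v ?al)" by simp
      show "0 \<le> ?be \<bullet> (((lam / nu) *\<^sub>R mat 1) *v ?be)" using A(2,3) by (simp add: smat_mv)
      show "0 \<le> ?ga \<bullet> ((lam *\<^sub>R mat 1) *v ?ga)" using A(2) by (simp add: smat_mv)
    qed
    also have "\<dots> = normal_measure (a \<bullet> ((?St ** transpose ?Ux ** matrix_inv D.Hm) *v (D.Lm *v Y)))
          (a \<bullet> ((?St ** transpose ?St - ?St ** transpose ?Ux ** D.Lm ** matrix_inv D.Gm ** transpose (?St ** transpose ?Ux)) *v a))"
      by (simp only: D.var_form D.mean_form[where Y=Y] inner_zero_right add_0_left)
    finally show ?thesis .
  qed
  let ?mu = "(?St ** transpose ?Ux ** matrix_inv D.Hm) *v (D.Lm *v Y)"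
  let ?S = "?St ** transpose ?St - ?St ** transpose ?Ux ** D.Lm ** matrix_inv D.Gm ** transpose (?St ** transpose ?Ux)"
  have G: "is_gaussian (distr M borel Fl) ?mu ?S"
    unfolding is_gaussian_def
  proof (intro conjI allI)
    show "sets (distr M borel Fl) = sets borel" by simp
    fix a :: "real^'k"
    show "distr (distr M borel Fl) borel ((\<bullet>) a) = normal_measure (a \<bullet> ?mu) (a \<bullet> (?S *v a))"
      by (subst distr_distr) (auto simp: comp_def main)
  qed
  show ?thesis
    unfolding Let_def F gram_fmat
    using G unfolding D.Hm_def D.Gm_def D.Lm_def D.Mi_def D.Kxx_def D.Kzz_def .
qed


end
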